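(* Let $n$ be an even positive integer. The deterministic query complexity of the partial function $\mathrm{1v2Cycle}$ on $n$ vertices satisfies $D(\mathrm{1v2Cycle})\ge\frac{n^2}{512}$.
   Context: Undirected graphs on vertex set $\{1,\dots,n\}$ are encoded as strings in $\{0,1\}^N$ with $N=\binom n2$, one bit per unordered pair indicating presence of the edge. The partial function $\mathrm{1v2Cycle}:\Delta\to\{0,1\}$ is defined on the set $\Delta$ of graphs that are either a single cycle of length $n$ or a disjoint union of two cycles each of length $n/2$; it equals $1$ on the former and $0$ on the latter. For a partial function $g:\Delta\to\{0,1\}$, $D(g)=\min\{D(f): f:\{0,1\}^N\to\{0,1\},\ f|_\Delta=g\}$, where $D(f)$ for total $f$ is the minimum depth of a deterministic decision tree computing $f$. *)

theory Defs
  imports Complex_Main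
begin

datatype 'v dtree = Leaf bool | Node 'v "'v dtree" "'v dtree"

fun dt_eval :: "'v dtree \<Rightarrow> ('v \<Rightarrow> bool) \<Rightarrow> bool" where
  "dt_eval (Leaf b) x = b"
| "dt_eval (Node v t0 t1) x = (if x v then dt_eval t1 x else dt_eval t0 x)"

fun dt_depth :: "'v dtree \<Rightarrow> nat" where
  "dt_depth (Leaf b) = 0"
| "dt_depth (Node v t0 t1) = Suc (max (dt_depth t0) (dt_depth t1))"

fun dt_vars :: "'v dtree \<Rightarrow> 'v set" where
  "dt_vars (Leaf b) = {}"
| "dt_vars (Node v t0 t1) = insert v (dt_vars t0 \<union> dt_vars t1)"

text \<open>The N = n choose 2 bit positions: unordered pairs {i,j}, represented as (i,j) with i<j.\<close>
definition Pairs :: "nat \<Rightarrow> (nat \<times> nat) set" where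
  "Pairs n = {(i, j). 1 \<le> i \<and> i < j \<and> j \<le> n}"

text \<open>Strings in {0,1}^N: bit assignments to the pairs (canonically False outside Pairs n).\<close>
definition Inputs :: "nat \<Rightarrow> (nat \<times> nat \<Rightarrow> bool) set" where
  "Inputs n = {x. \<forall>p. p \<notin> Pairs n \<longrightarrow> \<not> x p}"

definition graph_edges :: "nat \<Rightarrow> (nat \<times> nat \<Rightarrow> bool) \<Rightarrow> nat set set" where
  "graph_edges n x = {{i, j} | i j. (i, j) \<in> Pairs n \<and> x (i, j)}"

definition computes :: "nat \<Rightarrow> (nat \<times> nat) dtree \<Rightarrow> ((nat \<times> nat \<Rightarrow> bool) \<Rightarrow> bool) \<Rightarrow> bool" where
  "computes n T f \<longleftrightarrow> dt_vars T \<subseteq> Pairs n \<and> (\<forall>x \<in> Inputs n. dt_eval T x = f x)"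

definition D_total :: "nat \<Rightarrow> ((nat \<times> nat \<Rightarrow> bool) \<Rightarrow> bool) \<Rightarrow> nat" where
  "D_total n f = (LEAST d. \<exists>T. computes n T f \<and> dt_depth T = d)"

definition D_partial :: "nat \<Rightarrow> (nat \<times> nat \<Rightarrow> bool) set \<Rightarrow> ((nat \<times> nat \<Rightarrow> bool) \<Rightarrow> bool) \<Rightarrow> nat" where
  "D_partial n Delta g = (LEAST d. \<exists>f. (\<forall>x \<in> Delta. f x = g x) \<and> D_total n f = d)"

definition cycle_edges :: "nat list \<Rightarrow> nat set set" where
  "cycle_edges vs = {{vs ! i, vs ! ((i + 1) mod length vs)} | i. i < length vs}"

definition one_cycle :: "nat \<Rightarrow> (nat \<times> nat \<Rightarrow> bool) \<Rightarrow> bool" where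
  "one_cycle n x \<longleftrightarrow> (\<exists>vs. distinct vs \<and> length vs = n \<and> n \<ge> 3 \<and> set vs = {1..n}
      \<and> graph_edges n x = cycle_edges vs)"

definition two_cycles :: "nat \<Rightarrow> (nat \<times> nat \<Rightarrow> bool) \<Rightarrow> bool" where
  "two_cycles n x \<longleftrightarrow> (\<exists>vs ws. distinct (vs @ ws) \<and> length vs = n div 2 \<and> length ws = n div 2
      \<and> n div 2 \<ge> 3 \<and> set (vs @ ws) = {1..n}
      \<and> graph_edges n x = cycle_edges vs \<union> cycle_edges ws)"

definition Delta_1v2 :: "nat \<Rightarrow> (nat \<times> nat \<Rightarrow> bool) set" where
  "Delta_1v2 n = {x \<in> Inputs n. one_cycle n x \<or> two_cycles n x}"

definition one_v_two_cycle :: "nat \<Rightarrow> (nat \<times> nat \<Rightarrow> bool) \<Rightarrow> bool" where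
  "one_v_two_cycle n x = one_cycle n x"

end

theory Submission
  imports Defs
begin


fun pedges :: "'a list \<Rightarrow> 'a set set" where
  "pedges (x#y#zs) = insert {x,y} (pedges (y#zs))"
| "pedges _ = {}"

lemma pedges_append: "A \<noteq> [] \<Longrightarrow> B \<noteq> [] \<Longrightarrow> pedges (A @ B) = pedges A \<union> pedges B \<union> {{last A, hd B}}"
proof (induction A rule: pedges.induct)
  case (1 x y zs) then show ?case by auto
next
  case ("2_2" v) then show ?case by (cases B) auto
qed auto

lemma pedges_rev: "pedges (rev A) = pedges A"
proof (induction A)
  case (Cons a A)
  show ?case
  proof (cases A)
    case Nil then show ?thesis by simp
  next
    case (Cons h t)
    have ne: "A \<noteq> []" using Cons by simp
    have "pedges (rev (a#A)) = pedges (rev A @ [a])" by (simp only: rev.simps)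
    also have "\<dots> = pedges (rev A) \<union> {{last (rev A), a}}" using ne pedges_append[of "rev A" "[a]"] by simp
    also have "\<dots> = pedges A \<union> {{h, a}}" using Cons.IH Cons by (simp add: last_rev)
    finally show ?thesis using Cons by (auto simp: insert_commute)
  qed
qed simp

lemma pedges_subset: "e \<in> pedges A \<Longrightarrow> e \<subseteq> set A"
  by (induction A rule: pedges.induct) auto

lemma pedges_nth: "pedges L = {{L!i, L!Suc i} | i. Suc i < length L}"
proof (induction L rule: pedges.induct)
  case (1 x y zs)
  show ?case
  proof (rule set_eqI, rule iffI)
    fix e assume "e \<in> pedges (x#y#zs)"
    then have "e = {x,y} \<or> e \<in> pedges (y#zs)" by simp
    then show "e \<in> {{(x#y#zs)!i, (x#y#zs)!Suc i} | i. Suc i < length (x#y#zs)}"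
    proof
      assume "e = {x,y}" then show ?thesis by (rule_tac CollectI, rule_tac x=0 in exI) auto
    next
      assume "e \<in> pedges (y#zs)"
      then obtain i where "e = {(y#zs)!i, (y#zs)!Suc i}" "Suc i < length (y#zs)" using 1 by auto
      then show ?thesis by (rule_tac CollectI, rule_tac x="Suc i" in exI) auto
    qed
  next
    fix e assume "e \<in> {{(x#y#zs)!i, (x#y#zs)!Suc i} | i. Suc i < length (x#y#zs)}"
    then obtain i where i: "e = {(x#y#zs)!i, (x#y#zs)!Suc i}" "Suc i < length (x#y#zs)" by auto
    show "e \<in> pedges (x#y#zs)"
    proof (cases i)
      case 0 then show ?thesis using i by simp
    next
      case (Suc j)
      then have "e \<in> pedges (y#zs)" using i 1 by auto
      then show ?thesis by simp
    qed
  qed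
qed auto

lemma cycle_edges_pedges: "L \<noteq> [] \<Longrightarrow> cycle_edges L = insert {last L, hd L} (pedges L)"
proof -
  assume L: "L \<noteq> []"
  let ?s = "length L"
  have s: "?s > 0" using L by simp
  show ?thesis
  proof (rule set_eqI, rule iffI)
    fix e assume "e \<in> cycle_edges L"
    then obtain i where i: "i < ?s" "e = {L!i, L!((i+1) mod ?s)}" unfolding cycle_edges_def by auto
    show "e \<in> insert {last L, hd L} (pedges L)"
    proof (cases "Suc i < ?s")
      case True then show ?thesis using i by (auto simp: pedges_nth)
    next
      case False then have "i = ?s - 1" using i by simp
      then show ?thesis using i L by (simp add: last_conv_nth hd_conv_nth)
    qed
  next
    fix e assume "e \<in> insert {last L, hd L} (pedges L)"
    then show "e \<in> cycle_edges L"
    proof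
      assume "e = {last L, hd L}"
      then show ?thesis unfolding cycle_edges_def using L s
        by (rule_tac CollectI, rule_tac x="?s - 1" in exI) (simp add: last_conv_nth hd_conv_nth)
    next
      assume "e \<in> pedges L"
      then obtain i where "e = {L!i, L!Suc i}" "Suc i < ?s" by (auto simp: pedges_nth)
      then show ?thesis unfolding cycle_edges_def by (rule_tac CollectI, rule_tac x="i" in exI) simp
    qed
  qed
qed

lemma cycle_edges_append: "A \<noteq> [] \<Longrightarrow> B \<noteq> [] \<Longrightarrow>
  cycle_edges (A @ B) = pedges A \<union> pedges B \<union> {{last A, hd B}, {last B, hd A}}"
  by (simp add: cycle_edges_pedges pedges_append) auto

lemma cycle_edges_rotate1: "cycle_edges (rotate1 L) = cycle_edges L"
proof (cases L)
  case (Cons x xs)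
  show ?thesis
  proof (cases xs)
    case Nil then show ?thesis using Cons by simp
  next
    case (Cons y ys)
    have ne: "xs \<noteq> []" using Cons by simp
    have "cycle_edges (rotate1 L) = cycle_edges (xs @ [x])" using \<open>L = x#xs\<close> by simp
    also have "\<dots> = pedges xs \<union> {{last xs, x}, {x, hd xs}}" using ne cycle_edges_append[of xs "[x]"] by simp
    also have "\<dots> = cycle_edges L"
    proof -
      have "pedges (x#xs) = insert {x, hd xs} (pedges xs)" using Cons by simp
      moreover have "last (x#xs) = last xs" using ne by simp
      ultimately show ?thesis using \<open>L = x#xs\<close> by (auto simp: cycle_edges_pedges insert_commute)
    qed
    finally show ?thesis .
  qed
qed simp

lemma cycle_edges_rotate: "cycle_edges (rotate m L) = cycle_edges L"
  by (induction m) (simp_all only: rotate_Suc cycle_edges_rotate1 rotate0 id_apply)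



lemma two_opt:
  assumes "Suc b < length R"
  shows "cycle_edges R = pedges (take (Suc b) R) \<union> pedges (drop (Suc b) R) \<union> {{R!b, R!Suc b}, {last R, hd R}}"
    and "cycle_edges (rev (take (Suc b) R) @ drop (Suc b) R) = pedges (take (Suc b) R) \<union> pedges (drop (Suc b) R) \<union> {{hd R, R!Suc b}, {last R, R!b}}"
proof -
  let ?A = "take (Suc b) R" and ?B = "drop (Suc b) R"
  have An: "?A \<noteq> []" and Bn: "?B \<noteq> []" using assms by auto
  have lA: "last ?A = R!b" using assms by (simp add: take_Suc_conv_app_nth)
  have hB: "hd ?B = R!Suc b" using assms by (simp add: hd_drop_conv_nth)
  have lB: "last ?B = last R" using assms by simp
  have hA: "hd ?A = hd R" by simp
  have "cycle_edges R = cycle_edges (?A @ ?B)" by simp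
  also have "\<dots> = pedges ?A \<union> pedges ?B \<union> {{R!b, R!Suc b}, {last R, hd R}}"
    using cycle_edges_append[OF An Bn] lA hB lB hA by simp
  finally show "cycle_edges R = pedges (take (Suc b) R) \<union> pedges (drop (Suc b) R) \<union> {{R!b, R!Suc b}, {last R, hd R}}" .
  have rAn: "rev ?A \<noteq> []" using An by simp
  show "cycle_edges (rev ?A @ ?B) = pedges ?A \<union> pedges ?B \<union> {{hd R, R!Suc b}, {last R, R!b}}"
    using cycle_edges_append[OF rAn Bn] lA hB lB hA An by (simp add: pedges_rev last_rev hd_rev)
qed

definition Zp :: "nat set set \<Rightarrow> nat \<Rightarrow> nat set" where
  "Zp Z x = {v. {x,v} \<in> Z}"

definition closedC :: "nat set \<Rightarrow> nat set set \<Rightarrow> nat list \<Rightarrow> bool" where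
  "closedC C F L \<longleftrightarrow> (\<forall>e\<in>cycle_edges L. e \<inter> C \<noteq> {} \<longrightarrow> e \<in> F)"

lemma cycle_edges_finite: "finite (cycle_edges L)"
proof -
  have "cycle_edges L = (\<lambda>i. {L!i, L!((i+1) mod length L)}) ` {..<length L}"
    unfolding cycle_edges_def by auto
  then show ?thesis by simp
qed

lemma cycle_edges_nth: "e \<in> cycle_edges L \<Longrightarrow> \<exists>i<length L. e = {L!i, L!((i+1) mod length L)}"
  unfolding cycle_edges_def by auto

lemma rotate_to_end:
  assumes "e \<in> cycle_edges L"
  shows "\<exists>R. distinct R = distinct L \<and> set R = set L \<and> length R = length L \<and> cycle_edges R = cycle_edges L \<and> R \<noteq> [] \<and> e = {last R, hd R}"
proof -
  obtain i where i: "i < length L" "e = {L!i, L!((i+1) mod length L)}" using cycle_edges_nth[OF assms] by blast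
  let ?s = "length L"
  define R where "R = rotate (Suc i) L"
  have s: "?s > 0" using i by linarith
  have "R!0 = L!((Suc i) mod ?s)" by (metis R_def add_0_right nth_rotate s)
  moreover have "R!(?s - 1) = L!i"
  proof -
    have "?s - 1 < ?s" using s by simp
    then have "R!(?s - 1) = L!((Suc i + (?s - 1)) mod ?s)" unfolding R_def by (rule nth_rotate)
    also have "(Suc i + (?s - 1)) = i + ?s" using s by simp
    finally show ?thesis using i by simp
  qed
  moreover have "length R = ?s" unfolding R_def by simp
  ultimately have "length R = ?s" by simp
  have Rn: "R \<noteq> []" using \<open>length R = ?s\<close> s by auto
  have "hd R = L!((Suc i) mod ?s)" "last R = L!i"
    using \<open>R!0 = _\<close> \<open>R!(?s - 1) = _\<close> \<open>length R = ?s\<close> hd_conv_nth[OF Rn] last_conv_nth[OF Rn] by auto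
  moreover have "cycle_edges R = cycle_edges L" unfolding R_def by (rule cycle_edges_rotate)
  moreover have "distinct R = distinct L" "set R = set L" unfolding R_def by simp_all
  ultimately show ?thesis using i s Rn \<open>length R = ?s\<close> by (rule_tac x="R" in exI) (auto simp: insert_commute)
qed

lemma inj_consec:
  assumes "distinct R"
  shows "inj_on (\<lambda>b. {R!b, R!Suc b}) {b. Suc b < length R}"
proof (rule inj_onI)
  fix x y assume x: "x \<in> {b. Suc b < length R}" and y: "y \<in> {b. Suc b < length R}"
    and eq: "{R!x, R!Suc x} = {R!y, R!Suc y}"
  from eq have "(R!x = R!y \<and> R!Suc x = R!Suc y) \<or> (R!x = R!Suc y \<and> R!Suc x = R!y)" by (simp add: doubleton_eq_iff)
  then show "x = y"
  proof
    assume "R!x = R!y \<and> R!Suc x = R!Suc y" then show ?thesis using x y assms by (simp add: nth_eq_iff_index_eq)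
  next
    assume h: "R!x = R!Suc y \<and> R!Suc x = R!y"
    have "x = Suc y" using h x y assms nth_eq_iff_index_eq[OF assms, of x "Suc y"] by simp
    moreover have "Suc x = y" using h x y assms nth_eq_iff_index_eq[OF assms, of "Suc x" y] by simp
    ultimately show ?thesis by arith
  qed
qed

lemma repair_step:
  assumes dist: "distinct R" and len: "length R \<ge> 3" and R0: "R \<noteq> []"
    and F: "F \<subseteq> cycle_edges R" and FZ: "F \<inter> Z = {}" and cl: "closedC C F R"
    and finF: "finite F" and eZ: "{last R, hd R} \<in> Z"
    and Zb: "\<And>x. x \<in> set R \<Longrightarrow> x \<notin> C \<Longrightarrow> finite (Zp Z x) \<and> card (Zp Z x) \<le> D"
    and big: "card F + 2 * D + 1 < length R"
  shows "\<exists>N. distinct N \<and> set N = set R \<and> length N = length R \<and> F \<subseteq> cycle_edges N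
     \<and> closedC C F N \<and> Z \<inter> cycle_edges N \<subset> Z \<inter> cycle_edges R"
proof -
  let ?s = "length R"
  let ?a = "hd R" and ?z = "last R"
  have eR: "{?z, ?a} \<in> cycle_edges R" using R0 by (simp add: cycle_edges_pedges)
  have eF: "{?z, ?a} \<notin> F" using eZ FZ by auto
  have aC: "?a \<notin> C" and zC: "?z \<notin> C" using cl eR eF unfolding closedC_def by auto
  have aR: "?a \<in> set R" and zR: "?z \<in> set R" using R0 by auto
  note Za = Zb[OF aR aC] and Zz = Zb[OF zR zC]
  have fa: "finite {v. {?a,v} \<in> Z}" and fz: "finite {v. {?z,v} \<in> Z}" using Za Zz by (simp_all add: Zp_def)
  define B1 where "B1 = {b. Suc b < ?s \<and> {R!b, R!Suc b} \<in> F}"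
  define B2 where "B2 = {b. Suc b < ?s \<and> {?a, R!Suc b} \<in> Z}"
  define B3 where "B3 = {b. Suc b < ?s \<and> {?z, R!b} \<in> Z}"
  have c1: "card B1 \<le> card F"
    by (rule card_inj_on_le[OF inj_on_subset[OF inj_consec[OF dist]]]) (auto simp: B1_def finF)
  have c2: "card B2 \<le> card (Zp Z ?a)"
    by (rule card_inj_on_le[where f="\<lambda>b. R!Suc b"]) (auto simp: B2_def Zp_def inj_on_def nth_eq_iff_index_eq[OF dist] fa)
  have c3: "card B3 \<le> card (Zp Z ?z)"
    by (rule card_inj_on_le[where f="\<lambda>b. R!b"]) (auto simp: B3_def Zp_def inj_on_def nth_eq_iff_index_eq[OF dist] fz)
  have fin: "finite B1" "finite B2" "finite B3"
    by (rule finite_subset[of _ "{..<?s}"], auto simp: B1_def B2_def B3_def)+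
  have "card (B1 \<union> B2 \<union> B3) \<le> card B1 + card B2 + card B3"
    by (meson card_Un_le le_trans add_le_mono order_refl)
  also have "\<dots> < ?s - 1" using c1 c2 c3 Za Zz big by linarith
  finally have "card (B1 \<union> B2 \<union> B3) < card {..< ?s - 1}" by simp
  then have "\<not> {..< ?s - 1} \<subseteq> B1 \<union> B2 \<union> B3" using fin
    by (meson card_mono finite_UnI leD)
  then obtain b where b: "b < ?s - 1" "b \<notin> B1" "b \<notin> B2" "b \<notin> B3" by auto
  have sb: "Suc b < ?s" using b by simp
  have mF: "{R!b, R!Suc b} \<notin> F" using b sb unfolding B1_def by auto
  have n1: "{?a, R!Suc b} \<notin> Z" using b sb unfolding B2_def by auto
  have n2: "{?z, R!b} \<notin> Z" using b sb unfolding B3_def by auto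
  let ?A = "take (Suc b) R" and ?B = "drop (Suc b) R"
  define N where "N = rev ?A @ ?B"
  note E1 = two_opt(1)[OF sb] and E2 = two_opt(2)[OF sb]
  have dN: "distinct N" unfolding N_def using dist
    by (metis append_take_drop_id distinct_append distinct_rev set_rev)
  have sN: "set N = set R" unfolding N_def by (metis append_take_drop_id set_append set_rev)
  have lN: "length N = ?s" unfolding N_def by simp
  have FN: "F \<subseteq> cycle_edges N" using F E1 E2 mF eF unfolding N_def by auto
  have mR: "{R!b, R!Suc b} \<in> cycle_edges R" using E1 by auto
  have bC: "R!b \<notin> C" "R!Suc b \<notin> C" using cl mR mF unfolding closedC_def by auto
  have clN: "closedC C F N" unfolding closedC_def
  proof
    fix e assume e: "e \<in> cycle_edges N"
    show "e \<inter> C \<noteq> {} \<longrightarrow> e \<in> F"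
    proof (cases "e \<in> pedges ?A \<union> pedges ?B")
      case True then have "e \<in> cycle_edges R" using E1 by auto
      then show ?thesis using cl unfolding closedC_def by auto
    next
      case False then have "e = {?a, R!Suc b} \<or> e = {?z, R!b}" using e E2 unfolding N_def by auto
      then show ?thesis using aC zC bC by auto
    qed
  qed
  have disj: "set ?A \<inter> set ?B = {}" using dist by (metis append_take_drop_id distinct_append)
  have aA: "?a \<in> set ?A" using R0 by (metis hd_in_set hd_take take_eq_Nil zero_less_Suc nat.distinct(1))
  have zB: "?z \<in> set ?B" using sb by (metis last_drop last_in_set drop_eq_Nil not_le)
  have enot: "{?z, ?a} \<notin> pedges ?A \<union> pedges ?B"
  proof
    assume "{?z, ?a} \<in> pedges ?A \<union> pedges ?B"
    then have "{?z, ?a} \<subseteq> set ?A \<or> {?z, ?a} \<subseteq> set ?B" using pedges_subset by blast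
    then show False using aA zB disj by auto
  qed
  have "Z \<inter> cycle_edges N \<subseteq> Z \<inter> cycle_edges R" using E1 E2 n1 n2 unfolding N_def by auto
  moreover have "{?z, ?a} \<notin> Z \<inter> cycle_edges N" using E2 enot n1 n2 eZ unfolding N_def
    by (auto simp: insert_commute)
  moreover have "{?z, ?a} \<in> Z \<inter> cycle_edges R" using eZ eR by simp
  ultimately have "Z \<inter> cycle_edges N \<subset> Z \<inter> cycle_edges R" by blast
  then show ?thesis using dN sN lN FN clN by blast
qed



lemma repair:
  assumes "distinct L" "length L \<ge> 3" "F \<subseteq> cycle_edges L" "F \<inter> Z = {}" "closedC C F L"
    "finite F" "finite Z"
    "\<And>x. x \<in> set L \<Longrightarrow> x \<notin> C \<Longrightarrow> finite (Zp Z x) \<and> card (Zp Z x) \<le> D"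
    "card F + 2 * D + 1 < length L"
  shows "\<exists>L'. distinct L' \<and> set L' = set L \<and> length L' = length L \<and> F \<subseteq> cycle_edges L'
     \<and> closedC C F L' \<and> Z \<inter> cycle_edges L' = {}"
  using assms
proof (induction "card (Z \<inter> cycle_edges L)" arbitrary: L rule: less_induct)
  case less
  show ?case
  proof (cases "Z \<inter> cycle_edges L = {}")
    case True then show ?thesis using less.prems by blast
  next
    case False
    then obtain e where e: "e \<in> Z" "e \<in> cycle_edges L" by blast
    obtain R where R: "distinct R = distinct L" "set R = set L" "length R = length L"
      "cycle_edges R = cycle_edges L" "R \<noteq> []" "e = {last R, hd R}"
      using rotate_to_end[OF e(2)] by blast
    have clR: "closedC C F R" using less.prems(5) R(4) unfolding closedC_def by simp
    have dR: "distinct R" using R(1) less.prems(1) by simp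
    have lR: "length R \<ge> 3" using R(3) less.prems(2) by simp
    have FR: "F \<subseteq> cycle_edges R" using R(4) less.prems(3) by simp
    have eZ: "{last R, hd R} \<in> Z" using e R(6) by simp
    have ZbR: "\<And>x. x \<in> set R \<Longrightarrow> x \<notin> C \<Longrightarrow> finite (Zp Z x) \<and> card (Zp Z x) \<le> D"
      using less.prems(8) R(2) by blast
    have bigR: "card F + 2 * D + 1 < length R" using less.prems(9) R(3) by simp
    obtain N where N: "distinct N" "set N = set R" "length N = length R" "F \<subseteq> cycle_edges N"
      "closedC C F N" "Z \<inter> cycle_edges N \<subset> Z \<inter> cycle_edges R"
      using repair_step[OF dR lR R(5) FR less.prems(4) clR less.prems(6) eZ ZbR bigR] by blast
    have "card (Z \<inter> cycle_edges N) < card (Z \<inter> cycle_edges L)"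
      using N(6) R(4) by (simp add: psubset_card_mono cycle_edges_finite)
    moreover have "length N \<ge> 3" using N(3) lR by simp
    moreover have ZbN: "\<And>x. x \<in> set N \<Longrightarrow> x \<notin> C \<Longrightarrow> finite (Zp Z x) \<and> card (Zp Z x) \<le> D"
      using ZbR N(2) by blast
    moreover have "card F + 2 * D + 1 < length N" using bigR N(3) by simp
    ultimately obtain L' where "distinct L'" "set L' = set N" "length L' = length N" "F \<subseteq> cycle_edges L'"
     "closedC C F L'" "Z \<inter> cycle_edges L' = {}"
      using less.hyps[of N] N(1,4,5) less.prems(4,6,7) by blast
    then show ?thesis using N R by metis
  qed
qed

lemma cycle_edges_subset: "e \<in> cycle_edges L \<Longrightarrow> e \<subseteq> set L"
proof -
  assume "e \<in> cycle_edges L"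
  then obtain i where i: "i < length L" "e = {L!i, L!((i+1) mod length L)}" using cycle_edges_nth by blast
  then have "length L > 0" by linarith
  then have "(i+1) mod length L < length L" by simp
  then show ?thesis using i by (simp add: nth_mem)
qed

lemma closedC_notC: "closedC C F L \<Longrightarrow> e \<in> cycle_edges L \<Longrightarrow> e \<notin> F \<Longrightarrow> x \<in> e \<Longrightarrow> x \<notin> C"
  unfolding closedC_def by auto

lemma incident_card:
  assumes "distinct L"
  shows "card {e \<in> cycle_edges L. x \<in> e} \<le> 2"
proof (cases "x \<in> set L")
  case False
  have "{e \<in> cycle_edges L. x \<in> e} = {}"
    using False cycle_edges_subset by blast
  then show ?thesis unfolding \<open>{e \<in> cycle_edges L. x \<in> e} = {}\<close> by simp
next
  case True
  let ?s = "length L"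
  obtain p where p: "p < ?s" "L!p = x" using True by (auto simp: in_set_conv_nth)
  have "{e \<in> cycle_edges L. x \<in> e} \<subseteq> {{L!p, L!((p+1) mod ?s)}, {L!((p+?s-1) mod ?s), L!p}}"
  proof
    fix e assume "e \<in> {e \<in> cycle_edges L. x \<in> e}"
    then obtain i where i: "i < ?s" "e = {L!i, L!((i+1) mod ?s)}" "x \<in> e" unfolding cycle_edges_def by auto
    have s0: "?s > 0" using i by linarith
    then have im: "(i+1) mod ?s < ?s" by simp
    show "e \<in> {{L!p, L!((p+1) mod ?s)}, {L!((p+?s-1) mod ?s), L!p}}"
    proof (cases "x = L!i")
      case True then have "i = p" using p i assms by (simp add: nth_eq_iff_index_eq)
      then show ?thesis using i by simp
    next
      case False then have "x = L!((i+1) mod ?s)" using i by auto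
      then have ip: "(i+1) mod ?s = p" using p im assms by (simp add: nth_eq_iff_index_eq)
      have "i = (p+?s-1) mod ?s"
      proof (cases "Suc i < ?s")
        case True then have "p = Suc i" using ip by simp
        then show ?thesis using i by simp
      next
        case False then have "i = ?s - 1" using i by simp
        then have "p = 0" using ip i s0 by simp
        then show ?thesis using \<open>i = ?s - 1\<close> i by simp
      qed
      then show ?thesis using i ip by auto
    qed
  qed
  then have "card {e \<in> cycle_edges L. x \<in> e} \<le> card {{L!p, L!((p+1) mod ?s)}, {L!((p+?s-1) mod ?s), L!p}}"
    by (rule card_mono[rotated]) simp
  also have "\<dots> \<le> 2" by (simp add: card_insert_le_m1)
  finally show ?thesis .
qed



lemma split_cycle:
  assumes dist: "distinct L" and len: "length L = 2*h" and h: "h \<ge> 1"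
    and F: "F \<subseteq> cycle_edges L" and cl: "closedC C F L" and finF: "finite F" and small: "2 * card F < h"
  shows "\<exists>P Q. length P = h \<and> length Q = h \<and> distinct (P@Q) \<and> set (P@Q) = set L
     \<and> F \<subseteq> cycle_edges P \<union> cycle_edges Q \<and> closedC C F P \<and> closedC C F Q"
proof -
  let ?n = "2*h"
  define f1 where "f1 i = {L!(i+h-1), L!(i+h)}" for i
  define pv where "pv i = (if i = 0 then ?n - 1 else i - 1)" for i
  define f2 where "f2 i = {L!(pv i), L!i}" for i
  have inj1: "inj_on f1 {..<h}"
  proof (rule inj_onI)
    fix i j assume i: "i \<in> {..<h}" and j: "j \<in> {..<h}" and eq: "f1 i = f1 j"
    have b: "i+h-1 < length L" "i+h < length L" "j+h-1 < length L" "j+h < length L" using i j len h by auto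
    from eq have "(L!(i+h-1) = L!(j+h-1) \<and> L!(i+h) = L!(j+h)) \<or> (L!(i+h-1) = L!(j+h) \<and> L!(i+h) = L!(j+h-1))"
      unfolding f1_def by (simp add: doubleton_eq_iff)
    then show "i = j"
    proof
      assume "L!(i+h-1) = L!(j+h-1) \<and> L!(i+h) = L!(j+h)"
      then have "i+h = j+h" using b dist by (simp add: nth_eq_iff_index_eq)
      then show ?thesis by simp
    next
      assume a: "L!(i+h-1) = L!(j+h) \<and> L!(i+h) = L!(j+h-1)"
      then have "i+h-1 = j+h" using b nth_eq_iff_index_eq[OF dist] by blast
      moreover have "i+h = j+h-1" using a b nth_eq_iff_index_eq[OF dist] by blast
      ultimately show ?thesis by arith
    qed
  qed
  have inj2: "inj_on f2 {..<h}"
  proof (rule inj_onI)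
    fix i j assume i: "i \<in> {..<h}" and j: "j \<in> {..<h}" and eq: "f2 i = f2 j"
    have b: "pv i < length L" "i < length L" "pv j < length L" "j < length L" using i j len h unfolding pv_def by auto
    from eq have "(L!(pv i) = L!(pv j) \<and> L!i = L!j) \<or> (L!(pv i) = L!j \<and> L!i = L!(pv j))"
      unfolding f2_def by (simp add: doubleton_eq_iff)
    then show "i = j"
    proof
      assume "L!(pv i) = L!(pv j) \<and> L!i = L!j"
      then show ?thesis using b dist by (simp add: nth_eq_iff_index_eq)
    next
      assume a: "L!(pv i) = L!j \<and> L!i = L!(pv j)"
      then have "pv i = j" using b nth_eq_iff_index_eq[OF dist] by blast
      moreover have "i = pv j" using a b nth_eq_iff_index_eq[OF dist] by blast
      ultimately show ?thesis using i j h unfolding pv_def by (auto split: if_splits)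
    qed
  qed
  define B1 where "B1 = {i \<in> {..<h}. f1 i \<in> F}"
  define B2 where "B2 = {i \<in> {..<h}. f2 i \<in> F}"
  have c1: "card B1 \<le> card F"
    by (rule card_inj_on_le[OF inj_on_subset[OF inj1]]) (auto simp: B1_def finF)
  have c2: "card B2 \<le> card F"
    by (rule card_inj_on_le[OF inj_on_subset[OF inj2]]) (auto simp: B2_def finF)
  have lt: "card (B1 \<union> B2) < card {..<h}" using c1 c2 small card_Un_le[of B1 B2] by simp
  have fin: "finite (B1 \<union> B2)" unfolding B1_def B2_def by auto
  have "\<not> {..<h} \<subseteq> B1 \<union> B2"
  proof
    assume "{..<h} \<subseteq> B1 \<union> B2"
    then have "card {..<h} \<le> card (B1 \<union> B2)" by (rule card_mono[OF fin])
    then show False using lt by simp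
  qed
  then obtain i where i: "i < h" "f1 i \<notin> F" "f2 i \<notin> F" unfolding B1_def B2_def by auto
  define R where "R = rotate i L"
  have lR: "length R = ?n" unfolding R_def using len by simp
  have Rn: "\<And>j. j < ?n \<Longrightarrow> R!j = L!((i+j) mod ?n)" unfolding R_def using len by (simp add: nth_rotate)
  define P where "P = take h R"
  define Q where "Q = drop h R"
  have RPQ: "R = P @ Q" unfolding P_def Q_def by simp
  have Pn: "P \<noteq> []" and Qn: "Q \<noteq> []" unfolding P_def Q_def using lR h by auto
  have lP: "length P = h" and lQ: "length Q = h" unfolding P_def Q_def using lR by auto
  have "last P = P!(h-1)" using Pn lP by (simp add: last_conv_nth)
  also have "\<dots> = R!(h-1)" unfolding P_def using h by simp
  also have "\<dots> = L!(i+h-1)" using Rn[of "h-1"] h i by simp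
  finally have e1: "last P = L!(i+h-1)" .
  have "hd Q = R!h" unfolding Q_def using lR h by (simp add: hd_drop_conv_nth)
  also have "\<dots> = L!(i+h)" using Rn[of h] h i by simp
  finally have e2: "hd Q = L!(i+h)" .
  have "hd P = R!0" unfolding P_def using Pn P_def by (simp add: hd_conv_nth)
  also have "\<dots> = L!i" using Rn[of 0] h i by simp
  finally have e3: "hd P = L!i" .
  have "last Q = last R" unfolding Q_def using lR h by simp
  also have "\<dots> = R!(?n - 1)"
  proof -
    have Rne: "R \<noteq> []" using lR h by auto
    show ?thesis using last_conv_nth[OF Rne] lR by simp
  qed
  also have "\<dots> = L!((i + (?n - 1)) mod ?n)" using Rn[of "?n - 1"] h by simp
  also have "\<dots> = L!(pv i)"
  proof (cases "i = 0")
    case True then show ?thesis unfolding pv_def using h by simp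
  next
    case False
    then have eq: "i + (?n - 1) = (i - 1) + ?n" using h by simp
    have lt: "i - 1 < ?n" using i by simp
    have "(i + (?n - 1)) mod ?n = ((i - 1) + ?n) mod ?n" by (simp only: eq)
    also have "\<dots> = (i - 1) mod ?n" by (rule mod_add_self2)
    also have "\<dots> = i - 1" using lt by (rule mod_less)
    finally have "(i + (?n - 1)) mod ?n = i - 1" .
    then show ?thesis unfolding pv_def using False by simp
  qed
  finally have e4: "last Q = L!(pv i)" .
  have "cycle_edges L = cycle_edges R" unfolding R_def by (simp only: cycle_edges_rotate)
  also have "\<dots> = cycle_edges (P@Q)" using RPQ by simp
  also have "\<dots> = pedges P \<union> pedges Q \<union> {{last P, hd Q}, {last Q, hd P}}" by (rule cycle_edges_append[OF Pn Qn])
  also have "\<dots> = pedges P \<union> pedges Q \<union> {f1 i, f2 i}" unfolding f1_def f2_def using e1 e2 e3 e4 by simp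
  finally have cR: "cycle_edges L = pedges P \<union> pedges Q \<union> {f1 i, f2 i}" .
  have cP: "cycle_edges P = insert {last P, hd P} (pedges P)" using Pn by (rule cycle_edges_pedges)
  have cQ: "cycle_edges Q = insert {last Q, hd Q} (pedges Q)" using Qn by (rule cycle_edges_pedges)
  have f1L: "f1 i \<in> cycle_edges L" and f2L: "f2 i \<in> cycle_edges L" using cR by auto
  have nC: "last P \<notin> C" "hd Q \<notin> C" "hd P \<notin> C" "last Q \<notin> C"
    using closedC_notC[OF cl f1L i(2)] closedC_notC[OF cl f2L i(3)] e1 e2 e3 e4
    unfolding f1_def f2_def by auto
  have "F \<subseteq> cycle_edges P \<union> cycle_edges Q" using F cR i cP cQ by auto
  moreover have "closedC C F P" unfolding closedC_def
  proof (intro ballI impI)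
    fix e assume "e \<in> cycle_edges P" "e \<inter> C \<noteq> {}"
    then show "e \<in> F" using cP cR cl nC unfolding closedC_def by auto
  qed
  moreover have "closedC C F Q" unfolding closedC_def
  proof (intro ballI impI)
    fix e assume "e \<in> cycle_edges Q" "e \<inter> C \<noteq> {}"
    then show "e \<in> F" using cQ cR cl nC unfolding closedC_def by auto
  qed
  moreover have "distinct (P@Q)" "set (P@Q) = set L"
  proof -
    have "distinct R" "set R = set L" unfolding R_def using dist by simp_all
    then show "distinct (P@Q)" "set (P@Q) = set L" using RPQ by simp_all
  qed
  ultimately show ?thesis using lP lQ by blast
qed



lemma cycle_edges_doubleton:
  assumes "distinct L" "length L \<ge> 2" "e \<in> cycle_edges L"
  shows "\<exists>a b. e = {a,b} \<and> a \<noteq> b \<and> a \<in> set L \<and> b \<in> set L"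
proof -
  obtain i where i: "i < length L" "e = {L!i, L!((i+1) mod length L)}" using cycle_edges_nth[OF assms(3)] by blast
  have m: "(i+1) mod length L < length L" using i by (metis mod_less_divisor gr_zeroI not_less0)
  have "(i+1) mod length L \<noteq> i"
  proof (cases "Suc i < length L")
    case True then show ?thesis by simp
  next
    case False then have ii: "i = length L - 1" using i by simp
    have "Suc (length L - 1) = length L" using assms(2) by simp
    then have "(i+1) mod length L = 0" using ii by simp
    then show ?thesis using ii assms(2) by simp
  qed
  then have "L!i \<noteq> L!((i+1) mod length L)" using assms(1) i m by (simp add: nth_eq_iff_index_eq)
  then show ?thesis using i m by (metis nth_mem)
qed

definition inp :: "nat \<Rightarrow> nat set set \<Rightarrow> (nat \<times> nat \<Rightarrow> bool)" where
  "inp n G = (\<lambda>p. p \<in> Pairs n \<and> {fst p, snd p} \<in> G)"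

lemma inp_Inputs: "inp n G \<in> Inputs n"
  unfolding inp_def Inputs_def by auto

lemma graph_edges_inp:
  assumes "\<And>e. e \<in> G \<Longrightarrow> \<exists>a b. e = {a,b} \<and> a \<noteq> b \<and> a \<in> {1..n} \<and> b \<in> {1..n}"
  shows "graph_edges n (inp n G) = G"
proof
  show "graph_edges n (inp n G) \<subseteq> G" unfolding graph_edges_def inp_def by auto
next
  show "G \<subseteq> graph_edges n (inp n G)"
  proof
    fix e assume "e \<in> G"
    then obtain a b where ab: "e = {a,b}" "a \<noteq> b" "a \<in> {1..n}" "b \<in> {1..n}" using assms by blast
    show "e \<in> graph_edges n (inp n G)"
    proof (cases "a < b")
      case True
      then have "(a,b) \<in> Pairs n" using ab unfolding Pairs_def by auto
      then show ?thesis unfolding graph_edges_def inp_def using ab \<open>e \<in> G\<close> by auto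
    next
      case False
      then have "(b,a) \<in> Pairs n" using ab unfolding Pairs_def by auto
      moreover have "{b,a} = e" using ab by auto
      ultimately show ?thesis unfolding graph_edges_def inp_def using \<open>e \<in> G\<close> by force
    qed
  qed
qed

definition Sset :: "nat \<Rightarrow> nat set set \<Rightarrow> nat set set \<Rightarrow> (nat \<times> nat \<Rightarrow> bool) set" where
  "Sset n E Z = {x \<in> Inputs n. \<forall>i j. (i,j) \<in> Pairs n \<longrightarrow> ({i,j} \<in> E \<longrightarrow> x (i,j)) \<and> ({i,j} \<in> Z \<longrightarrow> \<not> x (i,j))}"

lemma inp_Sset: "E \<subseteq> G \<Longrightarrow> Z \<inter> G = {} \<Longrightarrow> inp n G \<in> Sset n E Z"
  unfolding Sset_def inp_def Inputs_def by auto

lemma one_cycle_inp: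
  assumes "distinct L" "length L = n" "set L = {1..n}" "n \<ge> 3"
  shows "one_cycle n (inp n (cycle_edges L))"
proof -
  have "graph_edges n (inp n (cycle_edges L)) = cycle_edges L"
    by (rule graph_edges_inp) (use cycle_edges_doubleton[of L] assms in auto)
  then show ?thesis unfolding one_cycle_def using assms by blast
qed

lemma two_cycles_inp:
  assumes "distinct (P@Q)" "length P = n div 2" "length Q = n div 2" "set (P@Q) = {1..n}" "n div 2 \<ge> 3"
  shows "two_cycles n (inp n (cycle_edges P \<union> cycle_edges Q))"
proof -
  have dP: "distinct P" and dQ: "distinct Q" using assms(1) by auto
  have "graph_edges n (inp n (cycle_edges P \<union> cycle_edges Q)) = cycle_edges P \<union> cycle_edges Q"
  proof (rule graph_edges_inp)
    fix e assume "e \<in> cycle_edges P \<union> cycle_edges Q"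
    then show "\<exists>a b. e = {a,b} \<and> a \<noteq> b \<and> a \<in> {1..n} \<and> b \<in> {1..n}"
      using cycle_edges_doubleton[OF dP] cycle_edges_doubleton[OF dQ] assms by fastforce
  qed
  then show ?thesis unfolding two_cycles_def using assms by blast
qed

lemma not_one_cycle:
  assumes "distinct (P@Q)" "P \<noteq> []" "Q \<noteq> []" "set (P@Q) = {1..n}"
    and G: "graph_edges n x = cycle_edges P \<union> cycle_edges Q"
  shows "\<not> one_cycle n x"
proof
  assume "one_cycle n x"
  then obtain vs where vs: "distinct vs" "length vs = n" "set vs = {1..n}" "graph_edges n x = cycle_edges vs"
    unfolding one_cycle_def by blast
  have ce: "cycle_edges vs = cycle_edges P \<union> cycle_edges Q" using vs G by simp
  have disj: "set P \<inter> set Q = {}" using assms(1) by auto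
  obtain a where a: "a \<in> set P" using assms(2) by (cases P) auto
  then have "a \<in> set vs" using vs assms(4) by auto
  then obtain p where p: "p < n" "vs!p = a" using vs(2) by (metis in_set_conv_nth)
  have n0: "n > 0" using p by simp
  have step: "\<And>q. q < n \<Longrightarrow> vs!q \<in> set P \<Longrightarrow> vs!((q+1) mod n) \<in> set P"
  proof -
    fix q assume q: "q < n" "vs!q \<in> set P"
    have "{vs!q, vs!((q+1) mod n)} \<in> cycle_edges vs" unfolding cycle_edges_def using q vs by auto
    then have "{vs!q, vs!((q+1) mod n)} \<subseteq> set P \<or> {vs!q, vs!((q+1) mod n)} \<subseteq> set Q"
      using ce cycle_edges_subset by blast
    then show "vs!((q+1) mod n) \<in> set P" using q disj by auto
  qed
  have all: "\<And>j. vs!((p+j) mod n) \<in> set P"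
  proof -
    fix j show "vs!((p+j) mod n) \<in> set P"
    proof (induction j)
      case 0 then show ?case using p a by simp
    next
      case (Suc j)
      have "vs!(((p+j) mod n + 1) mod n) \<in> set P" using step[OF _ Suc] n0 by simp
      moreover have "((p+j) mod n + 1) mod n = (p + Suc j) mod n" by (simp add: mod_Suc_eq)
      ultimately show ?case by simp
    qed
  qed
  obtain b where b: "b \<in> set Q" using assms(3) by (cases Q) auto
  then have "b \<in> set vs" using vs assms(4) by auto
  then obtain r where r: "r < n" "vs!r = b" using vs(2) by (metis in_set_conv_nth)
  have "(p + (r + n - p)) mod n = r" using r p by simp
  then have "b \<in> set P" using all[of "r + n - p"] r by simp
  then show False using b disj by auto
qed



definition cntset :: "nat set \<Rightarrow> nat set set \<Rightarrow> nat \<Rightarrow> nat set" where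
  "cntset C Z x = {v. v \<notin> C \<and> {x,v} \<in> Z}"

definition touchC :: "nat set \<Rightarrow> nat set set \<Rightarrow> nat set set" where
  "touchC C Z = {e \<in> Z. e \<inter> C \<noteq> {}}"

definition inv' :: "nat \<Rightarrow> nat \<Rightarrow> nat \<Rightarrow> nat set \<Rightarrow> nat set set \<Rightarrow> nat set set \<Rightarrow> nat set \<Rightarrow> nat list \<Rightarrow> bool" where
  "inv' n t k X E Z C L \<longleftrightarrow> distinct L \<and> length L = n \<and> set L = {1..n} \<and>
     E \<subseteq> cycle_edges L \<and> Z \<inter> cycle_edges L = {} \<and> closedC C E L \<and>
     finite Z \<and> (\<forall>e\<in>Z. e \<subseteq> {1..n}) \<and> card Z \<le> k \<and>
     C \<subseteq> {1..n} \<and> (t+1) * card C \<le> card (touchC C Z) \<and> card E \<le> 2 * card C \<and>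
     (\<forall>x. x \<notin> C \<longrightarrow> card (cntset C Z x) \<le> (if x \<in> X then t+1 else t))"

lemma Zp_sub: "\<forall>e\<in>Z. e \<subseteq> {1..n} \<Longrightarrow> Zp Z x \<subseteq> {1..n}"
  unfolding Zp_def by auto

lemma cnt_sub: "\<forall>e\<in>Z. e \<subseteq> {1..n} \<Longrightarrow> cntset C Z x \<subseteq> {1..n}"
  unfolding cntset_def by auto

lemma inv_card_C: "inv' n t k X E Z C L \<Longrightarrow> (t+1) * card C \<le> k"
proof -
  assume a: "inv' n t k X E Z C L"
  then have "card (touchC C Z) \<le> card Z" unfolding inv'_def touchC_def by (auto intro: card_mono)
  then show ?thesis using a unfolding inv'_def by linarith
qed

lemma inv_mono_k: "inv' n t k X E Z C L \<Longrightarrow> k \<le> k' \<Longrightarrow> inv' n t k' X E Z C L"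
  unfolding inv'_def by auto

definition ci :: "nat \<Rightarrow> nat list \<Rightarrow> nat set set \<Rightarrow> nat \<Rightarrow> nat set set \<Rightarrow> nat set \<Rightarrow> nat set set \<times> nat set" where
  "ci t L Z x E C = (if x \<notin> C \<and> t < card (cntset C Z x)
      then (E \<union> {e \<in> cycle_edges L. x \<in> e}, insert x C) else (E, C))"

lemma ci_inv:
  assumes inv: "inv' n t k X E Z C L" and r: "ci t L Z x E C = (E', C')"
  shows "inv' n t k (X - {x}) E' Z C' L \<and> E \<subseteq> E'"
proof (cases "x \<notin> C \<and> t < card (cntset C Z x)")
  case False
  then have eq: "E' = E" "C' = C" using r unfolding ci_def by auto
  show ?thesis using inv False unfolding eq inv'_def by (auto split: if_splits)
next
  case True
  then have eq: "E' = E \<union> {e \<in> cycle_edges L. x \<in> e}" "C' = insert x C" using r unfolding ci_def by auto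
  have xC: "x \<notin> C" and big: "t < card (cntset C Z x)" using True by auto
  have Zs: "\<forall>e\<in>Z. e \<subseteq> {1..n}" and fZ: "finite Z" and Cs: "C \<subseteq> {1..n}" using inv unfolding inv'_def by auto
  have fC: "finite C" using Cs finite_subset by blast
  have fcnt: "finite (cntset C Z x)" using cnt_sub[OF Zs] finite_subset by blast
  have "cntset C Z x \<noteq> {}" using big by auto
  then obtain v where "{x,v} \<in> Z" unfolding cntset_def by auto
  then have xn: "x \<in> {1..n}" using Zs by auto
  have dL: "distinct L" using inv unfolding inv'_def by simp
  have E1: "E' \<subseteq> cycle_edges L" using inv unfolding eq inv'_def by auto
  have cl: "closedC C' E' L" using inv unfolding eq inv'_def closedC_def by auto
  have cE: "card E' \<le> 2 * card C'"
  proof -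
    have "card E' \<le> card E + card {e \<in> cycle_edges L. x \<in> e}" unfolding eq by (rule card_Un_le)
    also have "\<dots> \<le> 2 * card C + 2" using inv incident_card[OF dL, of x] unfolding inv'_def by linarith
    also have "\<dots> = 2 * card C'" unfolding eq using xC fC by simp
    finally show ?thesis .
  qed
  have tC: "(t+1) * card C' \<le> card (touchC C' Z)"
  proof -
    let ?I = "(\<lambda>v. {x,v}) ` cntset C Z x"
    have ci1: "card ?I = card (cntset C Z x)"
      by (rule card_image) (auto simp: inj_on_def doubleton_eq_iff)
    have sub: "touchC C Z \<union> ?I \<subseteq> touchC C' Z" unfolding touchC_def cntset_def eq by auto
    have dis: "touchC C Z \<inter> ?I = {}" unfolding touchC_def cntset_def using xC by auto
    have ft: "finite (touchC C' Z)" unfolding touchC_def using fZ by simp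
    have "card (touchC C Z) + card ?I = card (touchC C Z \<union> ?I)"
      by (rule card_Un_disjoint[symmetric]) (use ft sub dis in \<open>auto intro: finite_subset\<close>)
    also have "\<dots> \<le> card (touchC C' Z)" using sub ft by (rule card_mono[rotated])
    finally have "card (touchC C Z) + card (cntset C Z x) \<le> card (touchC C' Z)" using ci1 by simp
    moreover have "(t+1) * card C \<le> card (touchC C Z)" using inv unfolding inv'_def by simp
    moreover have "card C' = card C + 1" unfolding eq using xC fC by simp
    ultimately show ?thesis using big by simp
  qed
  have cnt: "\<forall>y. y \<notin> C' \<longrightarrow> card (cntset C' Z y) \<le> (if y \<in> X - {x} then t+1 else t)"
  proof (intro allI impI)
    fix y assume y: "y \<notin> C'"
    have "cntset C' Z y \<subseteq> cntset C Z y" unfolding cntset_def eq by auto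
    then have "card (cntset C' Z y) \<le> card (cntset C Z y)"
      using cnt_sub[OF Zs] by (meson card_mono finite_atLeastAtMost finite_subset)
    moreover have "y \<notin> C" "y \<noteq> x" using y eq by auto
    ultimately show "card (cntset C' Z y) \<le> (if y \<in> X - {x} then t+1 else t)"
      using inv unfolding inv'_def by (auto split: if_splits)
  qed
  show ?thesis using inv E1 cl cE tC cnt xn unfolding inv'_def eq by auto
qed

lemma cnt_insert: "cntset C (insert {i,j} Z) x \<subseteq> insert (if x = i then j else i) (cntset C Z x)"
  unfolding cntset_def by (auto simp: doubleton_eq_iff)

lemma cnt_insert_other: "x \<noteq> i \<Longrightarrow> x \<noteq> j \<Longrightarrow> cntset C (insert {i,j} Z) x = cntset C Z x"
  unfolding cntset_def by (auto simp: doubleton_eq_iff)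

lemma adv_step:
  assumes inv: "inv' n t k {} E Z C L" and ij: "(i,j) \<in> Pairs n"
    and num: "card E + 2 * (t + 1 + card C) + 1 < n"
  shows "\<exists>b E' Z' C' L'. inv' n t (Suc k) {} E' Z' C' L' \<and> Sset n E' Z' \<subseteq> {x \<in> Sset n E Z. x (i,j) = b}"
proof (cases "{i,j} \<in> E")
  case True
  have "inv' n t (Suc k) {} E Z C L" using inv_mono_k[OF inv] by simp
  moreover have "Sset n E Z \<subseteq> {x \<in> Sset n E Z. x (i,j) = True}" using True ij unfolding Sset_def by auto
  ultimately show ?thesis by blast
next
  case False
  define Z' where "Z' = insert {i,j} Z"
  have ijn: "i \<in> {1..n}" "j \<in> {1..n}" "i \<noteq> j" using ij unfolding Pairs_def by auto
  have dL: "distinct L" and lL: "length L = n" and sL: "set L = {1..n}" and EL: "E \<subseteq> cycle_edges L"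
    and ZL: "Z \<inter> cycle_edges L = {}" and clL: "closedC C E L" and fZ: "finite Z"
    and Zs: "\<forall>e\<in>Z. e \<subseteq> {1..n}" and cZ: "card Z \<le> k" and Cs: "C \<subseteq> {1..n}"
    and tC: "(t+1) * card C \<le> card (touchC C Z)" and cE: "card E \<le> 2 * card C"
    and cnt: "\<forall>x. x \<notin> C \<longrightarrow> card (cntset C Z x) \<le> t"
    using inv unfolding inv'_def by auto
  have fZ': "finite Z'" unfolding Z'_def using fZ by simp
  have Zs': "\<forall>e\<in>Z'. e \<subseteq> {1..n}" unfolding Z'_def using Zs ijn by auto
  have fC: "finite C" using Cs finite_subset by blast
  have fE: "finite E" using EL cycle_edges_finite finite_subset by blast
  have cnt': "\<forall>x. x \<notin> C \<longrightarrow> card (cntset C Z' x) \<le> (if x \<in> {i,j} then t+1 else t)"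
  proof (intro allI impI)
    fix x assume x: "x \<notin> C"
    show "card (cntset C Z' x) \<le> (if x \<in> {i,j} then t+1 else t)"
    proof (cases "x \<in> {i,j}")
      case True
      have "card (cntset C Z' x) \<le> card (insert (if x = i then j else i) (cntset C Z x))"
        unfolding Z'_def by (rule card_mono[OF _ cnt_insert]) (use cnt_sub[OF Zs] in \<open>auto intro: finite_subset\<close>)
      also have "\<dots> \<le> card (cntset C Z x) + 1" by (simp add: card_insert_le_m1 card_insert_if)
      also have "\<dots> \<le> t + 1" using cnt x by simp
      finally show ?thesis using True by simp
    next
      case False
      then show ?thesis using cnt x cnt_insert_other[of x i j C Z] unfolding Z'_def by simp
    qed
  qed
  have Zb: "\<And>x. x \<in> set L \<Longrightarrow> x \<notin> C \<Longrightarrow> finite (Zp Z' x) \<and> card (Zp Z' x) \<le> t + 1 + card C"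
  proof -
    fix x assume x: "x \<in> set L" "x \<notin> C"
    have fin: "finite (Zp Z' x)" using Zp_sub[OF Zs'] finite_subset by blast
    have "Zp Z' x \<subseteq> cntset C Z' x \<union> C" unfolding Zp_def cntset_def by auto
    then have "card (Zp Z' x) \<le> card (cntset C Z' x \<union> C)"
      by (rule card_mono[rotated]) (use cnt_sub[OF Zs'] fC in \<open>auto intro: finite_subset\<close>)
    also have "\<dots> \<le> card (cntset C Z' x) + card C" by (rule card_Un_le)
    also have "\<dots> \<le> t + 1 + card C" using cnt' x by (auto split: if_splits)
    finally show "finite (Zp Z' x) \<and> card (Zp Z' x) \<le> t + 1 + card C" using fin by simp
  qed
  have EZ': "E \<inter> Z' = {}" using EL ZL False unfolding Z'_def by auto
  obtain L' where L': "distinct L'" "set L' = set L" "length L' = length L" "E \<subseteq> cycle_edges L'"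
      "closedC C E L'" "Z' \<inter> cycle_edges L' = {}"
  proof (cases "{i,j} \<in> cycle_edges L")
    case True
    have n3: "length L \<ge> 3" using num lL by simp
    have "card E + 2 * (t + 1 + card C) + 1 < length L" using num lL by simp
    from repair[OF dL n3 EL EZ' clL fE fZ' Zb this] that show ?thesis by blast
  next
    case False
    have "Z' \<inter> cycle_edges L = {}" using ZL False unfolding Z'_def by auto
    then show ?thesis using that dL EL clL by blast
  qed
  have touch: "card (touchC C Z) \<le> card (touchC C Z')"
    by (rule card_mono) (auto simp: touchC_def Z'_def fZ)
  have cZ': "card Z' \<le> Suc k" unfolding Z'_def using cZ fZ by (simp add: card_insert_if)
  have inv1: "inv' n t (Suc k) {i,j} E Z' C L'"
    unfolding inv'_def using L' lL sL fZ' Zs' cZ' Cs tC touch cE cnt' by auto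
  obtain E1 C1 where r1: "ci t L' Z' i E C = (E1, C1)" by (cases "ci t L' Z' i E C") auto
  have inv2: "inv' n t (Suc k) ({i,j} - {i}) E1 Z' C1 L'" and s1: "E \<subseteq> E1" using ci_inv[OF inv1 r1] by auto
  obtain E2 C2 where r2: "ci t L' Z' j E1 C1 = (E2, C2)" by (cases "ci t L' Z' j E1 C1") auto
  have inv3: "inv' n t (Suc k) ({i,j} - {i} - {j}) E2 Z' C2 L'" and s2: "E1 \<subseteq> E2" using ci_inv[OF inv2 r2] by auto
  have X: "{i,j} - {i} - {j} = {}" by auto
  have inv4: "inv' n t (Suc k) {} E2 Z' C2 L'" using inv3 unfolding X .
  have "Sset n E2 Z' \<subseteq> {x \<in> Sset n E Z. x (i,j) = False}"
    using s1 s2 ij unfolding Sset_def Z'_def by auto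
  then show ?thesis using inv4 by blast
qed



lemma numeric:
  assumes inv: "inv' n t k X E Z C L" and kK: "k \<le> K" and K: "512 * K \<le> n^2" and t: "t = n div 16"
  shows "32 * card C \<le> n" "16 * card E \<le> n" "16 * t \<le> n"
proof -
  have a: "(t+1) * card C \<le> K" using inv_card_C[OF inv] kK by linarith
  have cE: "card E \<le> 2 * card C" using inv unfolding inv'_def by simp
  have tb: "n + 1 \<le> 16 * (t+1)" using t by simp
  show "32 * card C \<le> n"
  proof (rule ccontr)
    assume "\<not> 32 * card C \<le> n"
    then have "n + 1 \<le> 32 * card C" by simp
    then have "(n+1) * (n+1) \<le> (32 * card C) * (16 * (t+1))" using tb by (rule mult_le_mono)
    also have "\<dots> = 512 * ((t+1) * card C)" by (simp add: algebra_simps)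
    also have "\<dots> \<le> 512 * K" using a by simp
    also have "\<dots> \<le> n^2" using K .
    finally show False by (simp add: power2_eq_square)
  qed
  then show "16 * card E \<le> n" using cE by linarith
  show "16 * t \<le> n" using t by simp
qed

lemma leaf:
  assumes inv: "inv' n t k {} E Z C L" and ev: "even n" and n6: "n \<ge> 6"
    and num: "16 * card E \<le> n" "16 * t \<le> n" "32 * card C \<le> n"
  shows "\<exists>x y. x \<in> Sset n E Z \<and> x \<in> Delta_1v2 n \<and> y \<in> Sset n E Z \<and> y \<in> Delta_1v2 n
      \<and> one_cycle n x \<and> \<not> one_cycle n y"
proof -
  define h where "h = n div 2"
  have nh: "n = 2 * h" unfolding h_def using ev by simp
  have h3: "h \<ge> 3" using n6 nh by simp
  have dL: "distinct L" and lL: "length L = n" and sL: "set L = {1..n}" and EL: "E \<subseteq> cycle_edges L"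
    and ZL: "Z \<inter> cycle_edges L = {}" and clL: "closedC C E L" and fZ: "finite Z"
    and Zs: "\<forall>e\<in>Z. e \<subseteq> {1..n}" and Cs: "C \<subseteq> {1..n}"
    and cnt: "\<forall>x. x \<notin> C \<longrightarrow> card (cntset C Z x) \<le> t"
    using inv unfolding inv'_def by auto
  have fC: "finite C" using Cs finite_subset by blast
  have fE: "finite E" using EL cycle_edges_finite finite_subset by blast
  define x where "x = inp n (cycle_edges L)"
  have x1: "x \<in> Sset n E Z" unfolding x_def using EL ZL by (rule inp_Sset)
  have x2: "one_cycle n x" unfolding x_def using dL lL sL n6 by (intro one_cycle_inp) auto
  have x3: "x \<in> Delta_1v2 n" unfolding Delta_1v2_def using x2 inp_Inputs unfolding x_def by auto
  have "2 * card E < h" using num nh h3 by linarith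
  then obtain P Q where PQ: "length P = h" "length Q = h" "distinct (P@Q)" "set (P@Q) = set L"
     "E \<subseteq> cycle_edges P \<union> cycle_edges Q" "closedC C E P" "closedC C E Q"
    using split_cycle[OF dL _ _ EL clL fE, of h] lL nh h3 by auto
  have Zb: "\<And>v. v \<notin> C \<Longrightarrow> finite (Zp Z v) \<and> card (Zp Z v) \<le> t + card C"
  proof -
    fix v assume v: "v \<notin> C"
    have fin: "finite (Zp Z v)" using Zp_sub[OF Zs] finite_subset by blast
    have "Zp Z v \<subseteq> cntset C Z v \<union> C" unfolding Zp_def cntset_def by auto
    then have "card (Zp Z v) \<le> card (cntset C Z v \<union> C)"
      by (rule card_mono[rotated]) (use cnt_sub[OF Zs] fC in \<open>auto intro: finite_subset\<close>)
    also have "\<dots> \<le> card (cntset C Z v) + card C" by (rule card_Un_le)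
    also have "\<dots> \<le> t + card C" using cnt v by auto
    finally show "finite (Zp Z v) \<and> card (Zp Z v) \<le> t + card C" using fin by simp
  qed
  have EZ: "E \<inter> Z = {}" using EL ZL by auto
  have rep: "\<exists>M'. distinct M' \<and> set M' = set M \<and> length M' = length M \<and> E \<inter> cycle_edges M \<subseteq> cycle_edges M'
     \<and> Z \<inter> cycle_edges M' = {}"
    if M: "distinct M" "length M = h" "closedC C E M" for M
  proof -
    have cl: "closedC C (E \<inter> cycle_edges M) M" using M(3) unfolding closedC_def by auto
    have c: "card (E \<inter> cycle_edges M) \<le> card E" using fE by (simp add: card_mono)
    have "card (E \<inter> cycle_edges M) + 2 * t + 2 * card C + 1 < h" using c num nh h3 by linarith
    then have big: "card (E \<inter> cycle_edges M) + 2 * (t + card C) + 1 < length M" using M(2) by simp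
    show ?thesis using repair[OF M(1) _ _ _ cl _ fZ _ big] M(2) h3 EZ fE Zb by auto
  qed
  have dP: "distinct P" and dQ: "distinct Q" using PQ(3) by auto
  obtain P' where P': "distinct P'" "set P' = set P" "length P' = h" "E \<inter> cycle_edges P \<subseteq> cycle_edges P'"
     "Z \<inter> cycle_edges P' = {}" using rep[OF dP PQ(1) PQ(6)] PQ(1) by auto
  obtain Q' where Q': "distinct Q'" "set Q' = set Q" "length Q' = h" "E \<inter> cycle_edges Q \<subseteq> cycle_edges Q'"
     "Z \<inter> cycle_edges Q' = {}" using rep[OF dQ PQ(2) PQ(7)] PQ(2) by auto
  have dPQ: "distinct (P'@Q')" using P' Q' PQ(3) by auto
  have sPQ: "set (P'@Q') = {1..n}" using P' Q' PQ(4) sL by auto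
  define G where "G = cycle_edges P' \<union> cycle_edges Q'"
  define y where "y = inp n G"
  have EG: "E \<subseteq> G" unfolding G_def using PQ(5) P'(4) Q'(4) by auto
  have ZG: "Z \<inter> G = {}" unfolding G_def using P'(5) Q'(5) by auto
  have y1: "y \<in> Sset n E Z" unfolding y_def using EG ZG by (rule inp_Sset)
  have y2: "two_cycles n y" unfolding y_def G_def
    by (rule two_cycles_inp) (use dPQ P'(3) Q'(3) sPQ h_def h3 in auto)
  have gy: "graph_edges n y = G"
    unfolding y_def
  proof (rule graph_edges_inp)
    fix e assume "e \<in> G"
    then show "\<exists>a b. e = {a,b} \<and> a \<noteq> b \<and> a \<in> {1..n} \<and> b \<in> {1..n}"
      unfolding G_def using cycle_edges_doubleton[OF P'(1)] cycle_edges_doubleton[OF Q'(1)] P'(3) Q'(3) h3 sPQ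
      by fastforce
  qed
  have y3: "\<not> one_cycle n y"
    by (rule not_one_cycle[OF dPQ _ _ sPQ]) (use P'(3) Q'(3) h3 gy G_def in auto)
  have y4: "y \<in> Delta_1v2 n" unfolding Delta_1v2_def using y2 inp_Inputs unfolding y_def by auto
  show ?thesis using x1 x2 x3 y1 y3 y4 by blast
qed

lemma tree_claim:
  assumes "inv' n t k {} E Z C L" "dt_vars T \<subseteq> Pairs n" "k + dt_depth T \<le> K"
    and K: "512 * K \<le> n^2" and t: "t = n div 16" and ev: "even n" and n6: "n \<ge> 6"
  shows "\<exists>x y. x \<in> Sset n E Z \<and> x \<in> Delta_1v2 n \<and> y \<in> Sset n E Z \<and> y \<in> Delta_1v2 n
      \<and> one_cycle n x \<and> \<not> one_cycle n y \<and> dt_eval T x = dt_eval T y"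
  using assms(1-3)
proof (induction T arbitrary: k E Z C L)
  case (Leaf b)
  have "k \<le> K" using Leaf by simp
  note nm = numeric[OF Leaf(1) this K t]
  show ?case using leaf[OF Leaf(1) ev n6 nm(2) nm(3) nm(1)] by auto
next
  case (Node v t0 t1)
  obtain i j where v: "v = (i,j)" by (cases v)
  have ij: "(i,j) \<in> Pairs n" using Node.prems(2) v by simp
  have "k \<le> K" using Node.prems(3) by simp
  note nm = numeric[OF Node.prems(1) this K t]
  have "card E + 2 * t + 2 * card C + 3 < n" using nm n6 by linarith
  then have num: "card E + 2 * (t + 1 + card C) + 1 < n" by simp
  obtain b E' Z' C' L' where st: "inv' n t (Suc k) {} E' Z' C' L'"
      "Sset n E' Z' \<subseteq> {x \<in> Sset n E Z. x (i,j) = b}"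
    using adv_step[OF Node.prems(1) ij num] by blast
  define tb where "tb = (if b then t1 else t0)"
  have vars: "dt_vars tb \<subseteq> Pairs n" using Node.prems(2) unfolding tb_def by auto
  have dep: "Suc k + dt_depth tb \<le> K" using Node.prems(3) unfolding tb_def by auto
  have "\<exists>x y. x \<in> Sset n E' Z' \<and> x \<in> Delta_1v2 n \<and> y \<in> Sset n E' Z' \<and> y \<in> Delta_1v2 n
      \<and> one_cycle n x \<and> \<not> one_cycle n y \<and> dt_eval tb x = dt_eval tb y"
  proof (cases b)
    case True then show ?thesis using Node.IH(2)[OF st(1)] vars dep unfolding tb_def by simp
  next
    case False then show ?thesis using Node.IH(1)[OF st(1)] vars dep unfolding tb_def by simp
  qed
  then obtain x y where xy: "x \<in> Sset n E' Z'" "x \<in> Delta_1v2 n" "y \<in> Sset n E' Z'" "y \<in> Delta_1v2 n"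
      "one_cycle n x" "\<not> one_cycle n y" "dt_eval tb x = dt_eval tb y" by blast
  have "x (i,j) = b" "y (i,j) = b" "x \<in> Sset n E Z" "y \<in> Sset n E Z" using xy st(2) by auto
  then have "dt_eval (Node v t0 t1) x = dt_eval (Node v t0 t1) y" using xy(7) v unfolding tb_def by (cases b) simp_all
  then show ?case using xy \<open>x \<in> Sset n E Z\<close> \<open>y \<in> Sset n E Z\<close> by blast
qed

fun build :: "(nat \<times> nat) list \<Rightarrow> ((nat \<times> nat \<Rightarrow> bool) \<Rightarrow> bool) \<Rightarrow> (nat \<times> nat \<Rightarrow> bool) \<Rightarrow> (nat \<times> nat) dtree" where
  "build [] f a = Leaf (f a)"
| "build (p#ps) f a = Node p (build ps f (a(p := False))) (build ps f (a(p := True)))"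

lemma build_eval: "dt_eval (build ps f a) x = f (\<lambda>q. if q \<in> set ps then x q else a q)"
proof (induction ps arbitrary: a)
  case Nil then show ?case by simp
next
  case (Cons p ps)
  show ?case
  proof (cases "x p")
    case True
    have "(\<lambda>q. if q \<in> set ps then x q else (a(p := True)) q) = (\<lambda>q. if q \<in> set (p#ps) then x q else a q)"
      using True by auto
    then show ?thesis using True Cons by simp
  next
    case False
    have "(\<lambda>q. if q \<in> set ps then x q else (a(p := False)) q) = (\<lambda>q. if q \<in> set (p#ps) then x q else a q)"
      using False by auto
    then show ?thesis using False Cons by simp
  qed
qed

lemma build_vars: "dt_vars (build ps f a) \<subseteq> set ps"
  by (induction ps arbitrary: a) auto

lemma exists_tree: "\<exists>T. computes n T f"
proof -
  have "finite (Pairs n)"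
    by (rule finite_subset[of _ "{1..n} \<times> {1..n}"]) (auto simp: Pairs_def)
  then obtain ps where ps: "set ps = Pairs n" using finite_list by blast
  have "computes n (build ps f (\<lambda>_. False)) f"
    unfolding computes_def
  proof
    show "dt_vars (build ps f (\<lambda>_. False)) \<subseteq> Pairs n" using build_vars ps by metis
    show "\<forall>x\<in>Inputs n. dt_eval (build ps f (\<lambda>_. False)) x = f x"
    proof
      fix x assume x: "x \<in> Inputs n"
      have "(\<lambda>q. if q \<in> set ps then x q else False) = x"
      proof
        fix q show "(if q \<in> set ps then x q else False) = x q" using x ps unfolding Inputs_def by (cases q) auto
      qed
      then show "dt_eval (build ps f (\<lambda>_. False)) x = f x" by (simp add: build_eval)
    qed
  qed
  then show ?thesis by blast
qed



theorem corollary4p6: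
  fixes n :: nat
  assumes "even n" and "n \<ge> 6"
  shows "real (D_partial n (Delta_1v2 n) (one_v_two_cycle n)) \<ge> real n ^ 2 / 512"
proof -
  define K where "K = n^2 div 512"
  define t where "t = n div 16"
  define g where "g = one_v_two_cycle n"
  define D where "D = D_partial n (Delta_1v2 n) g"
  have ex: "\<exists>d f. (\<forall>x\<in>Delta_1v2 n. f x = g x) \<and> D_total n f = d" by blast
  obtain f0 where f0: "\<forall>x\<in>Delta_1v2 n. f0 x = g x" "D_total n f0 = D"
    using LeastI_ex[OF ex] unfolding D_def D_partial_def by blast
  have ex2: "\<exists>d T. computes n T f0 \<and> dt_depth T = d" using exists_tree by blast
  obtain T where T: "computes n T f0" "dt_depth T = D_total n f0"
    using LeastI_ex[OF ex2] unfolding D_total_def by blast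
  have KD: "K < D"
  proof (rule ccontr)
    assume "\<not> K < D"
    then have dep: "0 + dt_depth T \<le> K" using T f0 by simp
    define L0 where "L0 = [1..<n+1]"
    have inv0: "inv' n t 0 {} {} {} {} L0"
      unfolding inv'_def L0_def closedC_def cntset_def touchC_def by auto
    have vars: "dt_vars T \<subseteq> Pairs n" using T(1) unfolding computes_def by simp
    have K512: "512 * K \<le> n^2" unfolding K_def using div_mult_mod_eq[of "n^2" 512] by linarith
    obtain x y where xy: "x \<in> Sset n {} {}" "x \<in> Delta_1v2 n" "y \<in> Sset n {} {}" "y \<in> Delta_1v2 n"
      "one_cycle n x" "\<not> one_cycle n y" "dt_eval T x = dt_eval T y"
      using tree_claim[OF inv0 vars dep K512 t_def assms] by blast
    have "x \<in> Inputs n" "y \<in> Inputs n" using xy unfolding Sset_def by auto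
    then have "dt_eval T x = f0 x" "dt_eval T y = f0 y" using T(1) unfolding computes_def by auto
    moreover have "f0 x = True" "f0 y = False" using f0(1) xy unfolding g_def one_v_two_cycle_def by auto
    ultimately show False using xy(7) by simp
  qed
  have m: "n^2 mod 512 < 512" by simp
  have "n^2 = K * 512 + n^2 mod 512" unfolding K_def by simp
  then have "n^2 < 512 * K + 512" using m by linarith
  then have "n^2 < 512 * (K + 1)" by simp
  also have "\<dots> \<le> 512 * D" using KD by simp
  finally have "n^2 < 512 * D" .
  then have "real (n^2) < real (512 * D)" by (simp only: of_nat_less_iff)
  then have "real n ^ 2 < 512 * real D" by simp
  then show ?thesis unfolding D_def g_def by simp
qed

end
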